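(* Let $k$ be an uncountable algebraically closed field and let $A$ be a just infinite $k$-algebra which is countably generated as a $k$-algebra and does not satisfy a polynomial identity. Then $A$ is stably just infinite.
   Context: All rings are associative unital algebras over a field. A $k$-algebra $A$ is called just infinite if $\dim_k(A)=\infty$ and every nonzero two-sided ideal of $A$ has finite codimension in $A$. A just infinite $k$-algebra $A$ is stably just infinite if $A\otimes_k K$ is just infinite over $K$ for every field extension $K/k$. *)

theory Defs
  imports "HOL-Computational_Algebra.Polynomial" "HOL-Library.Countable_Set"
begin

definition is_algebra :: "('k::field \<Rightarrow> 'a::ring_1 \<Rightarrow> 'a) \<Rightarrow> bool" where
  "is_algebra sc \<longleftrightarrow> vector_space sc \<and>
     (\<forall>c x y. sc c (x * y) = sc c x * y \<and> sc c (x * y) = x * sc c y)"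

definition two_sided_ideal :: "'a::ring_1 set \<Rightarrow> bool" where
  "two_sided_ideal I \<longleftrightarrow> 0 \<in> I \<and> (\<forall>x\<in>I. \<forall>y\<in>I. x + y \<in> I) \<and> (\<forall>x\<in>I. - x \<in> I) \<and>
     (\<forall>x\<in>I. \<forall>a. a * x \<in> I \<and> x * a \<in> I)"

definition infinite_dim :: "('k::field \<Rightarrow> 'a::ring_1 \<Rightarrow> 'a) \<Rightarrow> bool" where
  "infinite_dim sc \<longleftrightarrow> \<not> (\<exists>F. finite F \<and> module.span sc F = UNIV)"

text \<open>Finite codimension of a subspace I: the quotient A/I is spanned by finitely many cosets.\<close>
definition finite_codim :: "('k::field \<Rightarrow> 'a::ring_1 \<Rightarrow> 'a) \<Rightarrow> 'a set \<Rightarrow> bool" where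
  "finite_codim sc I \<longleftrightarrow> (\<exists>F. finite F \<and> (\<forall>a. \<exists>b\<in>module.span sc F. a - b \<in> I))"

definition just_infinite :: "('k::field \<Rightarrow> 'a::ring_1 \<Rightarrow> 'a) \<Rightarrow> bool" where
  "just_infinite sc \<longleftrightarrow> is_algebra sc \<and> infinite_dim sc \<and>
     (\<forall>I. two_sided_ideal I \<and> I \<noteq> {0} \<longrightarrow> finite_codim sc I)"

definition subalg_gen :: "('k::field \<Rightarrow> 'a::ring_1 \<Rightarrow> 'a) \<Rightarrow> 'a set \<Rightarrow> 'a set" where
  "subalg_gen sc S = \<Inter>{B. S \<subseteq> B \<and> 1 \<in> B \<and> (\<forall>x\<in>B. \<forall>y\<in>B. x + y \<in> B \<and> x * y \<in> B) \<and>
      (\<forall>c. \<forall>x\<in>B. sc c x \<in> B)}"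

definition countably_generated :: "('k::field \<Rightarrow> 'a::ring_1 \<Rightarrow> 'a) \<Rightarrow> bool" where
  "countably_generated sc \<longleftrightarrow> (\<exists>S. countable S \<and> subalg_gen sc S = UNIV)"

text \<open>A noncommutative polynomial in variables x_0, x_1, ... over k
  (element of the free algebra) is given by its finitely supported coefficient function on
  words (lists of variable indices); it is evaluated at an assignment of the variables.\<close>
definition ncpoly_eval :: "('k::field \<Rightarrow> 'a::ring_1 \<Rightarrow> 'a) \<Rightarrow> (nat list \<Rightarrow> 'k) \<Rightarrow> (nat \<Rightarrow> 'a) \<Rightarrow> 'a"
  where "ncpoly_eval sc f x = (\<Sum>w\<in>{w. f w \<noteq> 0}. sc (f w) (prod_list (map x w)))"

definition satisfies_PI :: "('k::field \<Rightarrow> 'a::ring_1 \<Rightarrow> 'a) \<Rightarrow> bool" where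
  "satisfies_PI sc \<longleftrightarrow> (\<exists>f :: nat list \<Rightarrow> 'k. finite {w. f w \<noteq> 0} \<and> {w. f w \<noteq> 0} \<noteq> {} \<and>
      (\<forall>x. ncpoly_eval sc f x = 0))"

text \<open>Base change: T (a K-algebra, K a field extension of k via the embedding iota) is
  A tensor_k K, realised via a k-algebra homomorphism phi : A -> T whose K-linear extension
  A tensor_k K -> T is bijective, i.e. phi(A) spans T over K and phi maps k-linearly independent
  sets injectively onto K-linearly independent sets.\<close>
definition base_change ::
  "('k::field \<Rightarrow> 'a::ring_1 \<Rightarrow> 'a) \<Rightarrow> ('k \<Rightarrow> 'K::field) \<Rightarrow> ('K \<Rightarrow> 't::ring_1 \<Rightarrow> 't) \<Rightarrow> ('a \<Rightarrow> 't) \<Rightarrow> bool"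
  where
  "base_change sc iota tsc phi \<longleftrightarrow>
     is_algebra sc \<and> is_algebra tsc \<and>
     iota 1 = 1 \<and> (\<forall>x y. iota (x + y) = iota x + iota y \<and> iota (x * y) = iota x * iota y) \<and>
     phi 1 = 1 \<and> (\<forall>x y. phi (x + y) = phi x + phi y \<and> phi (x * y) = phi x * phi y) \<and>
     (\<forall>c x. phi (sc c x) = tsc (iota c) (phi x)) \<and>
     module.span tsc (range phi) = UNIV \<and>
     (\<forall>F. \<not> module.dependent sc F \<longrightarrow> inj_on phi F \<and> \<not> module.dependent tsc (phi ` F))"

end

theory Submission
  imports Defs "HOL-Combinatorics.Permutations"
begin


context vector_space begin

lemma fam_dep:
  assumes G: "finite G" "card G \<le> n" and b: "\<forall>i\<le>n. b i \<in> span G"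
  shows "\<exists>\<gamma>. (\<Sum>i\<le>n. \<gamma> i *s b i) = 0 \<and> (\<exists>i\<le>n. \<gamma> i \<noteq> 0)"
proof (cases "inj_on b {..n}")
  case False
  then obtain i j where ij: "i \<le> n" "j \<le> n" "i \<noteq> j" "b i = b j"
    unfolding inj_on_def by auto
  define \<gamma> where "\<gamma> k = (if k = i then 1 else if k = j then -1 else (0::'a))" for k
  have "\<gamma> k *s b k = (if k = i then b k else 0) - (if k = j then b k else 0)" for k
    using ij by (auto simp: \<gamma>_def)
  then have "(\<Sum>k\<le>n. \<gamma> k *s b k) = (\<Sum>k\<le>n. (if k = i then b k else 0)) - (\<Sum>k\<le>n. (if k = j then b k else 0))"
    by (simp add: sum_subtractf)
  also have "\<dots> = 0" using ij by simp
  finally show ?thesis using ij by (intro exI[of _ \<gamma>]) (auto simp: \<gamma>_def)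
next
  case True
  have cB: "card (b ` {..n}) = Suc n" using True by (simp add: card_image)
  have "dependent (b ` {..n})"
  proof (rule ccontr)
    assume "independent (b ` {..n})"
    from independent_span_bound[OF G(1) this] b have "card (b ` {..n}) \<le> card G" by auto
    with cB G show False by simp
  qed
  then obtain u where u: "\<exists>v\<in>b ` {..n}. u v \<noteq> 0" "(\<Sum>v\<in>b ` {..n}. u v *s v) = 0"
    by (auto simp: dependent_finite)
  have "(\<Sum>i\<le>n. u (b i) *s b i) = 0"
    using u(2) by (simp add: sum.reindex[OF True])
  with u(1) show ?thesis by (intro exI[of _ "\<lambda>i. u (b i)"]) auto
qed

lemma span_finite_subset:
  assumes "x \<in> span S" shows "\<exists>T. finite T \<and> T \<subseteq> S \<and> x \<in> span T"
proof -
  from assms obtain t r where "finite t" "t \<subseteq> S" "x = (\<Sum>a\<in>t. r a *s a)"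
    unfolding span_explicit by auto
  moreover have "\<forall>a\<in>t. r a *s a \<in> span t" by (auto intro: span_scale span_base)
  ultimately show ?thesis by (intro exI[of _ t]) (auto intro: span_sum)
qed

lemma indep_countable:
  assumes M: "countable M" and B: "independent B" "B \<subseteq> span M"
  shows "countable B"
proof -
  have "B \<subseteq> (\<Union>T\<in>{T. finite T \<and> T \<subseteq> M}. B \<inter> span T)"
  proof
    fix b assume "b \<in> B"
    with B(2) have "b \<in> span M" by auto
    then obtain T where "finite T" "T \<subseteq> M" "b \<in> span T" using span_finite_subset by metis
    with \<open>b \<in> B\<close> show "b \<in> (\<Union>T\<in>{T. finite T \<and> T \<subseteq> M}. B \<inter> span T)" by auto
  qed
  moreover have "countable (\<Union>T\<in>{T. finite T \<and> T \<subseteq> M}. B \<inter> span T)"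
  proof (rule countable_UN)
    show "countable {T. finite T \<and> T \<subseteq> M}" using countable_Collect_finite_subset[OF M] .
    fix T assume "T \<in> {T. finite T \<and> T \<subseteq> M}"
    then have fT: "finite T" by simp
    have "independent (B \<inter> span T)" using independent_mono[OF B(1)] by simp
    then have "finite (B \<inter> span T)"
      using independent_span_bound[OF fT] by simp
    then show "countable (B \<inter> span T)" by (rule countable_finite)
  qed
  ultimately show ?thesis by (rule countable_subset)
qed

end

lemma eigen:
  fixes sc :: "'k::alg_closed_field \<Rightarrow> 'a::ab_group_add \<Rightarrow> 'a"
  assumes vs: "vector_space sc" and G: "finite G"
    and gW: "\<forall>v\<in>module.span sc G. g v \<in> module.span sc G"
    and gadd: "\<forall>v\<in>module.span sc G. \<forall>w\<in>module.span sc G. g (v + w) = g v + g w"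
    and gsc: "\<forall>c. \<forall>v\<in>module.span sc G. g (sc c v) = sc c (g v)"
    and v: "v \<in> module.span sc G" "v \<noteq> 0"
  shows "\<exists>w r. w \<in> module.span sc G \<and> w \<noteq> 0 \<and> g w = sc r w"
proof -
  interpret V: vector_space sc by (rule vs)
  let ?W = "V.span G"
  have it: "(g ^^ i) u \<in> ?W" if "u \<in> ?W" for i u
    using that gW by (induction i) auto
  have gsum: "g (\<Sum>i\<in>I. h i) = (\<Sum>i\<in>I. g (h i))" if "finite I" "\<forall>i\<in>I. h i \<in> ?W" for I and h :: "nat \<Rightarrow> 'a"
    using that
  proof (induction I rule: finite_induct)
    case empty
    have "g 0 = g (0 + 0)" by simp
    also have "\<dots> = g 0 + g 0" using gadd V.span_zero by blast
    finally show ?case by simp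
  next
    case (insert a F)
    then have "(\<Sum>i\<in>F. h i) \<in> ?W" by (auto intro: V.span_sum)
    with insert show ?case by (simp add: gadd)
  qed
  define OP where "OP N p u = (\<Sum>i\<le>N. sc (coeff p i) ((g ^^ i) u))" for N and p :: "'k poly" and u
  have OPW: "OP N p u \<in> ?W" if "u \<in> ?W" for N p u
    unfolding OP_def using that it by (auto intro!: V.span_sum V.span_scale)
  have main: "\<forall>p u. p \<noteq> 0 \<longrightarrow> degree p \<le> N \<longrightarrow> u \<in> ?W \<longrightarrow> u \<noteq> 0 \<longrightarrow> OP N p u = 0 \<longrightarrow>
      (\<exists>w r. w \<in> ?W \<and> w \<noteq> 0 \<and> g w = sc r w)" for N
  proof (induction N)
    case 0
    show ?case
    proof (intro allI impI)
      fix p u assume "p \<noteq> 0" "degree p \<le> 0" "u \<in> ?W" "u \<noteq> 0" "OP 0 p u = 0"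
      then have "coeff p 0 \<noteq> 0" using leading_coeff_0_iff by fastforce
      with \<open>OP 0 p u = 0\<close> \<open>u \<noteq> 0\<close> show "\<exists>w r. w \<in> ?W \<and> w \<noteq> 0 \<and> g w = sc r w"
        by (simp add: OP_def)
    qed
  next
    case (Suc N)
    show ?case
    proof (intro allI impI)
      fix p u assume p: "p \<noteq> 0" "degree p \<le> Suc N" and u: "u \<in> ?W" "u \<noteq> 0" and z: "OP (Suc N) p u = 0"
      show "\<exists>w r. w \<in> ?W \<and> w \<noteq> 0 \<and> g w = sc r w"
      proof (cases "degree p = 0")
        case True
        then have c0: "coeff p 0 \<noteq> 0" using p leading_coeff_0_iff by fastforce
        have "OP (Suc N) p u = (\<Sum>i\<le>Suc N. if i = 0 then sc (coeff p 0) u else 0)"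
          unfolding OP_def by (rule sum.cong) (auto simp: True coeff_eq_0)
        also have "\<dots> = sc (coeff p 0) u" by simp
        finally show ?thesis using z c0 u by simp
      next
        case False
        then obtain r where r: "poly p r = 0" using alg_closed_imp_poly_has_root by blast
        define q where "q = synthetic_div p r"
        have dq: "degree q = degree p - 1" unfolding q_def by (rule degree_synthetic_div)
        have eq: "p + smult r q = pCons 0 q" using synthetic_div_correct[of p r] r by (simp add: q_def)
        have q0: "q \<noteq> 0" using eq p False by auto
        have cp: "coeff p i = coeff (pCons 0 q) i - r * coeff q i" for i
          using arg_cong[OF eq, of "\<lambda>x. coeff x i"] by (simp add: algebra_simps)
        have cqN: "coeff q (Suc N) = 0" using dq p False by (intro coeff_eq_0) auto
        have "OP (Suc N) p u = (\<Sum>i\<le>Suc N. sc (coeff (pCons 0 q) i) ((g ^^ i) u) - sc r (sc (coeff q i) ((g ^^ i) u)))"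
          unfolding OP_def cp by (intro sum.cong) (auto simp: V.scale_left_diff_distrib)
        also have "\<dots> = (\<Sum>i\<le>Suc N. sc (coeff (pCons 0 q) i) ((g ^^ i) u)) - sc r (\<Sum>i\<le>Suc N. sc (coeff q i) ((g ^^ i) u))"
          by (simp only: sum_subtractf V.scale_sum_right)
        also have "(\<Sum>i\<le>Suc N. sc (coeff (pCons 0 q) i) ((g ^^ i) u)) = (\<Sum>i\<le>N. sc (coeff q i) (g ((g ^^ i) u)))"
          by (subst sum.atMost_Suc_shift) simp
        also have "\<dots> = (\<Sum>i\<le>N. g (sc (coeff q i) ((g ^^ i) u)))"
          using gsc it u by (intro sum.cong) auto
        also have "\<dots> = g (OP N q u)"
          unfolding OP_def using it u by (subst gsum) (auto intro: V.span_scale)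
        also have "(\<Sum>i\<le>Suc N. sc (coeff q i) ((g ^^ i) u)) = OP N q u"
          unfolding OP_def by (simp add: cqN)
        finally have e: "g (OP N q u) = sc r (OP N q u)" using z by simp
        show ?thesis
        proof (cases "OP N q u = 0")
          case True
          have "degree q \<le> N" using dq p by simp
          then show ?thesis using Suc.IH[rule_format, OF q0 _ u] True by blast
        next
          case False
          with e OPW[OF u(1)] show ?thesis by blast
        qed
      qed
    qed
  qed
  obtain \<gamma> where \<gamma>: "(\<Sum>i\<le>card G. sc (\<gamma> i) ((g ^^ i) v)) = 0" "\<exists>i\<le>card G. \<gamma> i \<noteq> 0"
    using V.fam_dep[OF G le_refl, of "\<lambda>i. (g ^^ i) v"] it v by auto
  define p where "p = (\<Sum>i\<le>card G. monom (\<gamma> i) i)"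
  have cp: "coeff p i = \<gamma> i" if "i \<le> card G" for i
    unfolding p_def using that by (rule coeff_sum_monom)
  have "p \<noteq> 0" using \<gamma>(2) cp by force
  moreover have "degree p \<le> card G"
    unfolding p_def by (intro degree_le) (auto simp: coeff_sum)
  moreover have "OP (card G) p v = 0" unfolding OP_def using cp \<gamma>(1) by simp
  ultimately show ?thesis using v by (intro main[rule_format])
qed



definition Pm :: "(nat \<Rightarrow> nat) \<Rightarrow> nat \<Rightarrow> (nat \<Rightarrow> 'a::ring_1) \<Rightarrow> 'a" where
  "Pm \<sigma> m x = prod_list (map (\<lambda>i. x (\<sigma> i)) [0..<m])"

definition stdp :: "nat \<Rightarrow> (nat \<Rightarrow> 'a::ring_1) \<Rightarrow> 'a" where
  "stdp m x = (\<Sum>\<sigma> | \<sigma> permutes {..<m}. of_int (sign \<sigma>) * Pm \<sigma> m x)"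

lemma prod_list_slot_add:
  fixes x :: "nat \<Rightarrow> 'a::ring_1"
  assumes "distinct xs" "j \<in> set xs"
  shows "prod_list (map (x(j := u + v)) xs) = prod_list (map (x(j := u)) xs) + prod_list (map (x(j := v)) xs)"
  using assms
proof (induction xs)
  case (Cons a xs)
  show ?case
  proof (cases "a = j")
    case True
    with Cons have "j \<notin> set xs" by auto
    then have e: "map (x(j := w)) xs = map x xs" for w by (intro map_cong) auto
    show ?thesis using True by (simp only: True list.map prod_list.Cons fun_upd_same e distrib_right)
  next
    case False
    with Cons show ?thesis by (simp add: distrib_left)
  qed
qed simp

lemma prod_list_slot_scale:
  fixes x :: "nat \<Rightarrow> 'a::ring_1"
  assumes "distinct xs" "j \<in> set xs"
    and sc1: "\<forall>y z. sc c (y * z) = sc c y * z" and sc2: "\<forall>y z. sc c (y * z) = y * sc c z"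
  shows "prod_list (map (x(j := sc c u)) xs) = sc c (prod_list (map (x(j := u)) xs))"
  using assms(1,2)
proof (induction xs)
  case (Cons a xs)
  show ?case
  proof (cases "a = j")
    case True
    with Cons have "j \<notin> set xs" by auto
    then have e: "map (x(j := w)) xs = map x xs" for w by (intro map_cong) auto
    show ?thesis using True by (simp only: True list.map prod_list.Cons fun_upd_same e sc1)
  next
    case False
    with Cons show ?thesis by (simp add: sc2)
  qed
qed simp

lemma prod_list_slot_ideal:
  fixes x :: "nat \<Rightarrow> 'a::ring_1"
  assumes "j \<in> set xs" "two_sided_ideal L" "u \<in> L"
  shows "prod_list (map (x(j := u)) xs) \<in> L"
  using assms(1)
proof (induction xs)
  case (Cons a xs)
  show ?case
  proof (cases "a = j")
    case True
    then have eq: "prod_list (map (x(j := u)) (a # xs)) = u * prod_list (map (x(j := u)) xs)"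
      by (simp only: True list.map prod_list.Cons fun_upd_same)
    have "u * prod_list (map (x(j := u)) xs) \<in> L" using assms(2,3) unfolding two_sided_ideal_def by blast
    then show ?thesis by (simp only: eq)
  next
    case False
    then have "j \<in> set xs" using Cons.prems by auto
    then have "prod_list (map (x(j := u)) xs) \<in> L" using Cons.IH by blast
    moreover have "prod_list (map (x(j := u)) (a # xs)) = x a * prod_list (map (x(j := u)) xs)"
      using False by simp
    ultimately show ?thesis using assms(2) by (simp only: two_sided_ideal_def)
  qed
qed simp

lemma perm_list_props:
  assumes "\<sigma> permutes {..<m}" "j < m"
  shows "distinct (map \<sigma> [0..<m])" "j \<in> set (map \<sigma> [0..<m])"
proof -
  have "inj \<sigma>" by (rule permutes_inj[OF assms(1)])
  then have "inj_on \<sigma> (set [0..<m])" by (rule inj_on_subset) simp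
  then show "distinct (map \<sigma> [0..<m])" by (simp add: distinct_map)
  have e: "\<sigma> (inv \<sigma> j) = j" by (rule permutes_inverses(1)[OF assms(1)])
  have pi: "inv \<sigma> permutes {..<m}" by (rule permutes_inv[OF assms(1)])
  have "inv \<sigma> j \<in> {..<m}" using assms(2) by (simp only: permutes_in_image[OF pi]) simp
  then have "inv \<sigma> j \<in> set [0..<m]" by simp
  then have "\<sigma> (inv \<sigma> j) \<in> set (map \<sigma> [0..<m])" unfolding set_map by (rule imageI)
  then show "j \<in> set (map \<sigma> [0..<m])" by (simp only: e)
qed

lemma Pm_alt: "Pm \<sigma> m x = prod_list (map x (map \<sigma> [0..<m]))"
  unfolding Pm_def by (simp add: comp_def)

lemma stdp_add:
  fixes x :: "nat \<Rightarrow> 'a::ring_1"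
  assumes "j < m"
  shows "stdp m (x(j := u + v)) = stdp m (x(j := u)) + stdp m (x(j := v))"
proof -
  have *: "Pm \<sigma> m (x(j:=u+v)) = Pm \<sigma> m (x(j:=u)) + Pm \<sigma> m (x(j:=v))" if "\<sigma> permutes {..<m}" for \<sigma>
    unfolding Pm_alt using prod_list_slot_add[OF perm_list_props[OF that assms]] .
  show ?thesis
    unfolding stdp_def sum.distrib[symmetric] by (intro sum.cong) (auto simp: * distrib_left)
qed

lemma stdp_scale:
  fixes x :: "nat \<Rightarrow> 'a::ring_1"
  assumes "j < m" and alg: "is_algebra sc"
  shows "stdp m (x(j := sc c u)) = sc c (stdp m (x(j := u)))"
proof -
  interpret V: vector_space sc using alg by (simp add: is_algebra_def)
  have sc1: "\<forall>y z. sc c (y * z) = sc c y * z" and sc2: "\<forall>y z. sc c (y * z) = y * sc c z"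
    using alg unfolding is_algebra_def by blast+
  have *: "Pm \<sigma> m (x(j:=sc c u)) = sc c (Pm \<sigma> m (x(j:=u)))" if "\<sigma> permutes {..<m}" for \<sigma>
    unfolding Pm_alt using prod_list_slot_scale[of "map \<sigma> [0..<m]" j sc c x u, OF perm_list_props[OF that assms(1)] sc1 sc2] .
  have **: "of_int (sign \<sigma>) * sc c y = sc c (of_int (sign \<sigma>) * y)" for \<sigma> y
    by (rule sc2[rule_format, symmetric])
  show ?thesis
    unfolding stdp_def V.scale_sum_right by (intro sum.cong) (auto simp: * **)
qed

lemma ideal_sum:
  assumes "two_sided_ideal L" "\<forall>i\<in>I. h i \<in> L"
  shows "sum h I \<in> L"
proof (cases "finite I")
  case True
  then show ?thesis using assms(2)
    by (induction I rule: finite_induct) (use assms(1) in \<open>auto simp: two_sided_ideal_def\<close>)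
qed (use assms(1) in \<open>simp add: two_sided_ideal_def\<close>)

lemma stdp_ideal:
  fixes x :: "nat \<Rightarrow> 'a::ring_1"
  assumes "j < m" "two_sided_ideal L" "u \<in> L"
  shows "stdp m (x(j := u)) \<in> L"
  unfolding stdp_def
proof (rule ideal_sum[OF assms(2)], intro ballI)
  fix \<sigma> assume "\<sigma> \<in> {\<sigma>. \<sigma> permutes {..<m}}"
  then have "Pm \<sigma> m (x(j := u)) \<in> L"
    unfolding Pm_alt using prod_list_slot_ideal[OF perm_list_props(2)[OF _ assms(1)] assms(2,3)] by auto
  then show "of_int (sign \<sigma>) * Pm \<sigma> m (x(j := u)) \<in> L"
    using assms(2) by (simp add: two_sided_ideal_def)
qed

lemma stdp_alt:
  fixes x :: "nat \<Rightarrow> 'a::ring_1"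
  assumes ij: "i < m" "j < m" "i \<noteq> j" "x i = x j"
  shows "stdp m x = 0"
proof -
  define \<tau> where "\<tau> = Transposition.transpose i j"
  define P where "P = {\<sigma>. \<sigma> permutes {..<m}}"
  define E where "E = {\<sigma>\<in>P. evenperm \<sigma>}"
  define Od where "Od = {\<sigma>\<in>P. \<not> evenperm \<sigma>}"
  have finP: "finite P" unfolding P_def by (rule finite_permutations) simp
  have tP: "\<tau> permutes {..<m}" unfolding \<tau>_def using ij by (intro permutes_swap_id) auto
  have xt: "x (\<tau> y) = x y" for y unfolding \<tau>_def using ij by (auto simp: Transposition.transpose_def)
  have Pt: "Pm (\<tau> \<circ> \<sigma>) m x = Pm \<sigma> m x" for \<sigma> unfolding Pm_def by (simp add: xt)
  have perm: "permutation \<sigma>" if "\<sigma> \<in> P" for \<sigma> using that unfolding P_def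
    by (metis finite_lessThan permutation_permutes mem_Collect_eq)
  have ptau: "permutation \<tau>" using tP by (meson finite_lessThan permutation_permutes)
  have evt: "\<not> evenperm \<tau>" unfolding \<tau>_def using ij by (simp add: evenperm_swap)
  have bij: "bij_betw (\<lambda>\<sigma>. \<tau> \<circ> \<sigma>) E Od"
  proof (rule bij_betw_byWitness[where f' = "\<lambda>\<sigma>. \<tau> \<circ> \<sigma>"])
    show "\<forall>a\<in>E. \<tau> \<circ> (\<tau> \<circ> a) = a" unfolding \<tau>_def by (simp add: comp_assoc[symmetric])
    show "\<forall>a\<in>Od. \<tau> \<circ> (\<tau> \<circ> a) = a" unfolding \<tau>_def by (simp add: comp_assoc[symmetric])
    show "(\<lambda>\<sigma>. \<tau> \<circ> \<sigma>) ` E \<subseteq> Od"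
    proof
      fix \<rho> assume "\<rho> \<in> (\<lambda>\<sigma>. \<tau> \<circ> \<sigma>) ` E"
      then obtain \<sigma> where s: "\<sigma> \<in> E" "\<rho> = \<tau> \<circ> \<sigma>" by auto
      then have "\<sigma> \<in> P" "evenperm \<sigma>" unfolding E_def by auto
      then show "\<rho> \<in> Od" using s evenperm_comp[OF ptau perm[of \<sigma>]] evt permutes_compose[OF _ tP, of \<sigma>]
        unfolding Od_def P_def by auto
    qed
    show "(\<lambda>\<sigma>. \<tau> \<circ> \<sigma>) ` Od \<subseteq> E"
    proof
      fix \<rho> assume "\<rho> \<in> (\<lambda>\<sigma>. \<tau> \<circ> \<sigma>) ` Od"
      then obtain \<sigma> where s: "\<sigma> \<in> Od" "\<rho> = \<tau> \<circ> \<sigma>" by auto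
      then have "\<sigma> \<in> P" "\<not> evenperm \<sigma>" unfolding Od_def by auto
      then show "\<rho> \<in> E" using s evenperm_comp[OF ptau perm[of \<sigma>]] evt permutes_compose[OF _ tP, of \<sigma>]
        unfolding E_def P_def by auto
    qed
  qed
  have "stdp m x = (\<Sum>\<sigma>\<in>E. of_int (sign \<sigma>) * Pm \<sigma> m x) + (\<Sum>\<sigma>\<in>Od. of_int (sign \<sigma>) * Pm \<sigma> m x)"
    unfolding stdp_def P_def[symmetric] using finP
    by (subst sum.union_disjoint[symmetric]) (auto simp: E_def Od_def intro!: sum.cong)
  also have "(\<Sum>\<sigma>\<in>Od. of_int (sign \<sigma>) * Pm \<sigma> m x) = (\<Sum>\<sigma>\<in>E. of_int (sign (\<tau> \<circ> \<sigma>)) * Pm (\<tau> \<circ> \<sigma>) m x)"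
    using sum.reindex_bij_betw[OF bij, of "\<lambda>\<sigma>. of_int (sign \<sigma>) * Pm \<sigma> m x"] by simp
  also have "\<dots> = (\<Sum>\<sigma>\<in>E. - (of_int (sign \<sigma>) * Pm \<sigma> m x))"
  proof (rule sum.cong)
    fix \<sigma> assume "\<sigma> \<in> E"
    then have "\<sigma> \<in> P" by (simp add: E_def)
    have "sign (\<tau> \<circ> \<sigma>) = sign \<tau> * sign \<sigma>" by (rule sign_compose[OF ptau perm[OF \<open>\<sigma> \<in> P\<close>]])
    moreover have "sign \<tau> = -1" unfolding \<tau>_def using ij by (simp add: sign_swap_id)
    ultimately have "sign (\<tau> \<circ> \<sigma>) = - sign \<sigma>" by simp
    then show "of_int (sign (\<tau> \<circ> \<sigma>)) * Pm (\<tau> \<circ> \<sigma>) m x = - (of_int (sign \<sigma>) * Pm \<sigma> m x)"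
      by (simp add: Pt)
  qed simp
  finally show ?thesis by (simp add: sum_negf)
qed



lemma alg_facts:
  fixes sc :: "'k::field \<Rightarrow> 'a::ring_1 \<Rightarrow> 'a"
  assumes "is_algebra sc"
  shows "vector_space sc" "sc c (y * z) = sc c y * z" "sc c (y * z) = y * sc c z"
  using assms unfolding is_algebra_def by blast+

lemma ideal_scale:
  fixes sc :: "'k::field \<Rightarrow> 'a::ring_1 \<Rightarrow> 'a"
  assumes "is_algebra sc" "two_sided_ideal L" "y \<in> L"
  shows "sc c y \<in> L"
proof -
  have "sc c y = sc c 1 * y" using alg_facts(2)[OF assms(1), of c 1 y] by simp
  then show ?thesis using assms(2,3) unfolding two_sided_ideal_def by metis
qed

lemma stdp_in_ideal:
  fixes sc :: "'k::field \<Rightarrow> 'a::ring_1 \<Rightarrow> 'a"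
  assumes alg: "is_algebra sc" and L: "two_sided_ideal L" and F: "finite F" "card F \<le> d"
    and cod: "\<forall>a. \<exists>b\<in>module.span sc F. a - b \<in> L"
  shows "stdp (Suc d) x \<in> L"
proof -
  interpret V: vector_space sc using alg_facts(1)[OF alg] .
  have Ladd: "u + v \<in> L" if "u \<in> L" "v \<in> L" for u v using L that unfolding two_sided_ideal_def by blast
  have Lneg: "- u \<in> L" if "u \<in> L" for u using L that unfolding two_sided_ideal_def by blast
  have "\<forall>i. \<exists>bb. bb \<in> V.span F \<and> x i - bb \<in> L" using cod by blast
  then obtain b where b: "\<forall>i. b i \<in> V.span F \<and> x i - b i \<in> L" by metis
  obtain \<gamma> where \<gamma>: "(\<Sum>i\<le>d. sc (\<gamma> i) (b i)) = 0" "\<exists>i\<le>d. \<gamma> i \<noteq> 0"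
    using V.fam_dep[OF F] b by blast
  then obtain j where j: "j \<le> d" "\<gamma> j \<noteq> 0" by blast
  define I where "I = {..d} - {j}"
  define c where "c i = - \<gamma> i / \<gamma> j" for i
  define l where "l = x j - (\<Sum>i\<in>I. sc (c i) (x i))"
  have "(\<Sum>i\<le>d. sc (\<gamma> i) (x i)) = (\<Sum>i\<le>d. sc (\<gamma> i) (x i - b i)) + (\<Sum>i\<le>d. sc (\<gamma> i) (b i))"
    by (simp add: V.scale_right_diff_distrib sum_subtractf)
  also have "\<dots> = (\<Sum>i\<le>d. sc (\<gamma> i) (x i - b i))" using \<gamma>(1) by simp
  also have "\<dots> \<in> L"
    by (rule ideal_sum[OF L]) (use ideal_scale[OF alg L] b in blast)
  finally have sL: "(\<Sum>i\<le>d. sc (\<gamma> i) (x i)) \<in> L" .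
  have dI: "{..d} = insert j I" "j \<notin> I" "finite I" using j by (auto simp: I_def)
  have "sc (\<gamma> j) l = sc (\<gamma> j) (x j) - (\<Sum>i\<in>I. sc (\<gamma> j * c i) (x i))"
    unfolding l_def by (simp add: V.scale_right_diff_distrib V.scale_sum_right)
  also have "\<dots> = sc (\<gamma> j) (x j) + (\<Sum>i\<in>I. sc (\<gamma> i) (x i))"
    using j(2) by (simp add: c_def sum_negf[symmetric] V.scale_minus_left)
  also have "\<dots> = (\<Sum>i\<le>d. sc (\<gamma> i) (x i))" using dI by simp
  finally have "sc (\<gamma> j) l \<in> L" using sL by simp
  then have "sc (1 / \<gamma> j) (sc (\<gamma> j) l) \<in> L" by (rule ideal_scale[OF alg L])
  then have lL: "l \<in> L" using j(2) by simp
  have xj: "x j = (\<Sum>i\<in>I. sc (c i) (x i)) + l" by (simp add: l_def)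
  define S where "S u = stdp (Suc d) (x(j := u))" for u
  have jd: "j < Suc d" using j by simp
  have Sadd: "S (u + v) = S u + S v" for u v unfolding S_def by (rule stdp_add[OF jd])
  have Ssc: "S (sc a u) = sc a (S u)" for a u unfolding S_def by (rule stdp_scale[OF jd alg])
  have S0: "S 0 = 0" using Sadd[of 0 0] by simp
  have Ssum: "S (\<Sum>i\<in>I'. sc (c i) (x i)) = (\<Sum>i\<in>I'. sc (c i) (S (x i)))" if "finite I'" for I'
    using that by (induction I' rule: finite_induct) (simp_all add: S0 Sadd Ssc)
  have Sx: "S (x i) = 0" if "i \<in> I" for i
  proof -
    have "i < Suc d" "i \<noteq> j" using that by (auto simp: I_def)
    then show ?thesis unfolding S_def by (intro stdp_alt[of i "Suc d" j]) (auto simp: jd)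
  qed
  have "stdp (Suc d) x = S (x j)" unfolding S_def by simp
  also have "\<dots> = (\<Sum>i\<in>I. sc (c i) (S (x i))) + S l" by (subst xj) (simp add: Sadd Ssum dI)
  also have "\<dots> = S l" using Sx by simp
  finally show ?thesis unfolding S_def using stdp_ideal[OF jd L lL] by simp
qed

lemma stdp_PI:
  fixes sc :: "'k::field \<Rightarrow> 'a::ring_1 \<Rightarrow> 'a"
  assumes vs: "vector_space sc" and z: "\<forall>x::nat \<Rightarrow> 'a. stdp m x = 0"
  shows "satisfies_PI sc"
proof -
  interpret V: vector_space sc by (rule vs)
  define P where "P = {\<sigma>. \<sigma> permutes {..<m}}"
  define wf where "wf \<sigma> = map \<sigma> [0..<m]" for \<sigma> :: "nat \<Rightarrow> nat"
  have inj: "inj_on wf P"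
  proof (rule inj_onI)
    fix \<sigma> \<tau> assume s: "\<sigma> \<in> P" "\<tau> \<in> P" "wf \<sigma> = wf \<tau>"
    show "\<sigma> = \<tau>"
    proof
      fix i show "\<sigma> i = \<tau> i"
      proof (cases "i < m")
        case True
        have "wf \<sigma> ! i = wf \<tau> ! i" using s by simp
        then show ?thesis using True by (simp add: wf_def)
      next
        case False
        then show ?thesis using s(1,2) unfolding P_def by (simp add: permutes_not_in)
      qed
    qed
  qed
  define f where "f w = (if w \<in> wf ` P then (of_int (sign (inv_into P wf w)) :: 'k) else 0)" for w
  have sgn: "of_int (sign \<sigma>) \<noteq> (0::'k)" for \<sigma>
    by (simp add: sign_def)
  have fw: "f (wf \<sigma>) = of_int (sign \<sigma>)" if "\<sigma> \<in> P" for \<sigma>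
    using that inj by (simp add: f_def inv_into_f_f)
  have supp: "{w. f w \<noteq> 0} = wf ` P" using sgn by (auto simp: f_def)
  have finP: "finite P" unfolding P_def by (rule finite_permutations) simp
  have neP: "id \<in> P" unfolding P_def by (simp add: permutes_id)
  have scs: "sc (of_int (sign \<sigma>)) y = of_int (sign \<sigma>) * y" for \<sigma> y
    by (cases "evenperm \<sigma>") (simp_all add: sign_def V.scale_minus_left)
  have "ncpoly_eval sc f x = 0" for x
  proof -
    have "ncpoly_eval sc f x = (\<Sum>w\<in>wf ` P. sc (f w) (prod_list (map x w)))"
      unfolding ncpoly_eval_def supp ..
    also have "\<dots> = (\<Sum>\<sigma>\<in>P. sc (f (wf \<sigma>)) (prod_list (map x (wf \<sigma>))))"
      by (rule sum.reindex[OF inj, unfolded comp_def])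
    also have "\<dots> = (\<Sum>\<sigma>\<in>P. of_int (sign \<sigma>) * Pm \<sigma> m x)"
    proof (rule sum.cong)
      fix \<sigma> assume "\<sigma> \<in> P"
      have "prod_list (map x (wf \<sigma>)) = Pm \<sigma> m x" by (simp add: Pm_alt wf_def)
      then show "sc (f (wf \<sigma>)) (prod_list (map x (wf \<sigma>))) = of_int (sign \<sigma>) * Pm \<sigma> m x"
        using fw[OF \<open>\<sigma> \<in> P\<close>] scs by simp
    qed simp
    also have "\<dots> = stdp m x" unfolding stdp_def P_def ..
    finally show ?thesis using z by simp
  qed
  moreover have "finite {w. f w \<noteq> 0}" "{w. f w \<noteq> 0} \<noteq> {}" using supp finP neP by auto
  ultimately show ?thesis unfolding satisfies_PI_def by blast
qed

lemma count_span:
  fixes sc :: "'k::field \<Rightarrow> 'a::ring_1 \<Rightarrow> 'a"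
  assumes alg: "is_algebra sc" and cg: "countably_generated sc"
  shows "\<exists>M. countable M \<and> module.span sc M = UNIV"
proof -
  interpret V: vector_space sc using alg_facts(1)[OF alg] .
  obtain S where S: "countable S" "subalg_gen sc S = UNIV" using cg unfolding countably_generated_def by blast
  define M where "M = prod_list ` lists S"
  have cM: "countable M" unfolding M_def using S(1) by (simp add: countable_lists)
  have Mmul: "m * m' \<in> M" if mM: "m \<in> M" and mM': "m' \<in> M" for m m'
  proof -
    obtain ws where "m = prod_list ws" "ws \<in> lists S" using mM unfolding M_def by (rule imageE)
    moreover obtain ws' where "m' = prod_list ws'" "ws' \<in> lists S" using mM' unfolding M_def by (rule imageE)
    ultimately
    show ?thesis unfolding M_def by (intro image_eqI[of _ _ "ws @ ws'"]) auto
  qed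
  have left: "m * y \<in> V.span M" if m: "m \<in> M" and y: "y \<in> V.span M" for m y
  proof -
    have sub: "V.subspace {y. m * y \<in> V.span M}"
      by (rule V.subspaceI) (auto simp: distrib_left V.span_add V.span_zero alg_facts(3)[OF alg, symmetric] V.span_scale)
    have "\<forall>y\<in>M. m * y \<in> V.span M" using Mmul[OF m] V.span_base by blast
    then show ?thesis using V.span_induct[OF y, of "\<lambda>y. m * y \<in> V.span M"] sub by auto
  qed
  have mul: "x * y \<in> V.span M" if x: "x \<in> V.span M" and y: "y \<in> V.span M" for x y
  proof -
    have sub: "V.subspace {x. x * y \<in> V.span M}"
      by (rule V.subspaceI) (auto simp: distrib_right V.span_add V.span_zero alg_facts(2)[OF alg, symmetric] V.span_scale)
    have "\<forall>x\<in>M. x * y \<in> V.span M" using left y by blast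
    then show ?thesis using V.span_induct[OF x, of "\<lambda>x. x * y \<in> V.span M"] sub by auto
  qed
  have SM: "S \<subseteq> V.span M"
  proof
    fix s assume "s \<in> S"
    then have "prod_list [s] \<in> M" unfolding M_def by (intro imageI) simp
    then show "s \<in> V.span M" using V.span_base by fastforce
  qed
  have oM: "1 \<in> V.span M"
  proof -
    have "prod_list [] \<in> M" unfolding M_def by (intro imageI) simp
    then show ?thesis using V.span_base by fastforce
  qed
  have "subalg_gen sc S \<subseteq> V.span M"
    unfolding subalg_gen_def
    by (rule Inter_lower) (auto simp: SM oM mul V.span_add V.span_scale)
  then show ?thesis using S(2) cM by auto
qed



definition bimod :: "'a::ring_1 set \<Rightarrow> ('a \<Rightarrow> 'a) \<Rightarrow> bool" where
  "bimod J f \<longleftrightarrow> (\<forall>x\<in>J. \<forall>y\<in>J. f (x + y) = f x + f y) \<and> (\<forall>x\<in>J. \<forall>a. f (a * x) = a * f x \<and> f (x * a) = f x * a)"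

lemma bimod_mono: "bimod J f \<Longrightarrow> J' \<subseteq> J \<Longrightarrow> bimod J' f"
  unfolding bimod_def by blast

lemma single:
  fixes sc :: "'k::alg_closed_field \<Rightarrow> 'a::ring_1 \<Rightarrow> 'a"
  assumes unc: "uncountable (UNIV :: 'k set)" and ji: "just_infinite sc"
    and M: "countable M" "module.span sc M = UNIV" and nPI: "\<not> satisfies_PI sc"
    and J: "two_sided_ideal J" "J \<noteq> {0}" and f: "bimod J f"
  shows "\<exists>c J'. two_sided_ideal J' \<and> J' \<noteq> {0} \<and> J' \<subseteq> J \<and> (\<forall>x\<in>J'. f x = sc c x)"
proof -
  have alg: "is_algebra sc" using ji unfolding just_infinite_def by blast
  interpret V: vector_space sc using alg_facts(1)[OF alg] .
  have J0: "0 \<in> J" and Jadd: "\<And>u v. u \<in> J \<Longrightarrow> v \<in> J \<Longrightarrow> u + v \<in> J"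
    and Jneg: "\<And>u. u \<in> J \<Longrightarrow> - u \<in> J"
    and Jl: "\<And>u a. u \<in> J \<Longrightarrow> a * u \<in> J" and Jr: "\<And>u a. u \<in> J \<Longrightarrow> u * a \<in> J"
    using J(1) unfolding two_sided_ideal_def by blast+
  have Jsc: "\<And>u a. u \<in> J \<Longrightarrow> sc a u \<in> J" using ideal_scale[OF alg J(1)] by blast
  have fadd: "\<And>u v. u \<in> J \<Longrightarrow> v \<in> J \<Longrightarrow> f (u + v) = f u + f v"
    and fl: "\<And>u a. u \<in> J \<Longrightarrow> f (a * u) = a * f u" and fr: "\<And>u a. u \<in> J \<Longrightarrow> f (u * a) = f u * a"
    using f unfolding bimod_def by blast+
  have f0: "f 0 = 0" using fadd[OF J0 J0] by simp
  have fneg: "f (- u) = - f u" if "u \<in> J" for u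
  proof -
    have "f u + f (- u) = 0" using fadd[OF that Jneg[OF that]] f0 by simp
    then show ?thesis by (simp add: add_eq_0_iff)
  qed
  have fsc: "f (sc a u) = sc a (f u)" if "u \<in> J" for a u
  proof -
    have "sc a u = sc a 1 * u" using alg_facts(2)[OF alg, of a 1 u] by simp
    then have "f (sc a u) = sc a 1 * f u" using fl[OF that] by simp
    also have "\<dots> = sc a (f u)" using alg_facts(2)[OF alg, of a 1 "f u"] by simp
    finally show ?thesis .
  qed
  have fsum: "f (sum h I) = (\<Sum>i\<in>I. f (h i))" if "finite I" "\<forall>i\<in>I. h i \<in> J" for I and h :: "'k \<Rightarrow> 'a"
    using that
  proof (induction I rule: finite_induct)
    case (insert a F)
    have "sum h F \<in> J" using insert by (intro ideal_sum[OF J(1)]) auto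
    then show ?case using insert by (simp add: fadd)
  qed (simp add: f0)
  have Jsub: "V.subspace J" by (rule V.subspaceI) (auto intro: J0 Jadd Jsc)
  show ?thesis
  proof (cases "\<exists>c y. y \<in> J \<and> y \<noteq> 0 \<and> f y = sc c y")
    case True
    then obtain c y where y: "y \<in> J" "y \<noteq> 0" "f y = sc c y" by blast
    define J' where "J' = {y\<in>J. f y = sc c y}"
    have "two_sided_ideal J'"
      unfolding two_sided_ideal_def J'_def
    proof (intro conjI ballI allI)
      show "0 \<in> {y \<in> J. f y = sc c y}" using J0 f0 by simp
    next
      fix u v assume u: "u \<in> {y \<in> J. f y = sc c y}" and v: "v \<in> {y \<in> J. f y = sc c y}"
      then show "u + v \<in> {y \<in> J. f y = sc c y}" using Jadd fadd by (auto simp: V.scale_right_distrib)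
    next
      fix u assume u: "u \<in> {y \<in> J. f y = sc c y}"
      then show "- u \<in> {y \<in> J. f y = sc c y}" using Jneg fneg by (auto simp: V.scale_minus_right)
    next
      fix u a assume u: "u \<in> {y \<in> J. f y = sc c y}"
      then show "a * u \<in> {y \<in> J. f y = sc c y}" using Jl fl alg_facts(3)[OF alg] by auto
    next
      fix u a assume u: "u \<in> {y \<in> J. f y = sc c y}"
      then show "u * a \<in> {y \<in> J. f y = sc c y}" using Jr fr alg_facts(2)[OF alg] by auto
    qed
    moreover have "J' \<noteq> {0}" using y unfolding J'_def by blast
    ultimately show ?thesis unfolding J'_def by blast
  next
    case False
    then have noev: "\<And>c y. y \<in> J \<Longrightarrow> f y = sc c y \<Longrightarrow> y = 0" by blast
    obtain y0 where y0: "y0 \<in> J" "y0 \<noteq> 0" using J(2) J0 by blast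
    define L where "L c = {f y - sc c y | y. y \<in> J}" for c
    have Lid: "two_sided_ideal (L c)" for c
      unfolding two_sided_ideal_def
    proof (intro conjI ballI allI)
      show "0 \<in> L c" unfolding L_def using J0 f0 by force
    next
      fix u v assume "u \<in> L c" "v \<in> L c"
      then obtain yu yv where "yu \<in> J" "yv \<in> J" "u = f yu - sc c yu" "v = f yv - sc c yv"
        unfolding L_def by blast
      then show "u + v \<in> L c" unfolding L_def
        by (intro CollectI exI[of _ "yu + yv"]) (auto simp: Jadd fadd V.scale_right_distrib)
    next
      fix u assume "u \<in> L c"
      then obtain yu where "yu \<in> J" "u = f yu - sc c yu" unfolding L_def by blast
      then show "- u \<in> L c" unfolding L_def
        by (intro CollectI exI[of _ "- yu"]) (auto simp: Jneg fneg V.scale_minus_right)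
    next
      fix u a assume "u \<in> L c"
      then obtain yu where "yu \<in> J" "u = f yu - sc c yu" unfolding L_def by blast
      then show "a * u \<in> L c" unfolding L_def
        by (intro CollectI exI[of _ "a * yu"]) (auto simp: Jl fl right_diff_distrib alg_facts(3)[OF alg])
    next
      fix u a assume "u \<in> L c"
      then obtain yu where "yu \<in> J" "u = f yu - sc c yu" unfolding L_def by blast
      then show "u * a \<in> L c" unfolding L_def
        by (intro CollectI exI[of _ "yu * a"]) (auto simp: Jr fr left_diff_distrib alg_facts(2)[OF alg])
    qed
    have Lne: "L c \<noteq> {0}" for c
    proof -
      have "f y0 - sc c y0 \<noteq> 0" using noev[OF y0(1)] y0(2) by auto
      moreover have "f y0 - sc c y0 \<in> L c" unfolding L_def using y0 by blast
      ultimately show ?thesis by blast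
    qed
    have "\<forall>c. finite_codim sc (L c)" using ji Lid Lne unfolding just_infinite_def by blast
    then have "\<forall>c. \<exists>F. finite F \<and> (\<forall>a. \<exists>b\<in>V.span F. a - b \<in> L c)" unfolding finite_codim_def by blast
    then obtain F where F: "\<And>c. finite (F c)" "\<And>c. \<forall>a. \<exists>b\<in>V.span (F c). a - b \<in> L c" by metis
    have "\<exists>d. uncountable {c. card (F c) = d}"
    proof (rule ccontr)
      assume "\<not> ?thesis"
      then have "countable (\<Union>d\<in>(UNIV::nat set). {c. card (F c) = d})" by (intro countable_UN) auto
      moreover have "(\<Union>d\<in>(UNIV::nat set). {c. card (F c) = d}) = UNIV" by auto
      ultimately show False using unc by simp
    qed
    then obtain d where S: "uncountable {c. card (F c) = d}" by blast
    define S where "S = {c. card (F c) = d}"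
    have Z: "x = 0" if xS: "\<forall>c\<in>S. x \<in> L c" for x
    proof (rule ccontr)
      assume x0: "x \<noteq> 0"
      have "\<forall>c\<in>S. \<exists>y. y \<in> J \<and> f y - sc c y = x"
      proof
        fix c assume "c \<in> S"
        then have "x \<in> L c" using xS by blast
        then obtain yy where "x = f yy - sc c yy" "yy \<in> J" unfolding L_def by blast
        then show "\<exists>y. y \<in> J \<and> f y - sc c y = x" by auto
      qed
      then obtain y where y: "\<And>c. c \<in> S \<Longrightarrow> y c \<in> J \<and> f (y c) - sc c (y c) = x" by metis
      have yJ: "y c \<in> J" if "c \<in> S" for c using y[OF that] by blast
      have fy: "f (y c) = x + sc c (y c)" if "c \<in> S" for c using y[OF that] by (simp add: algebra_simps)
      have y0: "y c \<noteq> 0" if "c \<in> S" for c using fy[OF that] f0 x0 by auto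
      have yinj: "inj_on y S"
      proof (rule inj_onI)
        fix c c' assume "c \<in> S" "c' \<in> S" "y c = y c'"
        then have "sc c (y c) = sc c' (y c)" using fy by (metis add_left_cancel)
        then show "c = c'" using y0[OF \<open>c \<in> S\<close>] by simp
      qed
      have core: "\<forall>w. (\<Sum>c\<in>U. sc (w c) (y c)) = 0 \<longrightarrow> (\<forall>c\<in>U. w c = 0)"
        if "finite U" "U \<subseteq> S" for U
        using that
      proof (induction U rule: finite_induct)
        case empty
        then show ?case by simp
      next
        case (insert c0 U)
        show ?case
        proof (intro allI impI)
          fix w assume R: "(\<Sum>c\<in>insert c0 U. sc (w c) (y c)) = 0"
          let ?I = "insert c0 U"
          have yI: "\<forall>c\<in>?I. sc (w c) (y c) \<in> J" using insert(4) yJ Jsc by blast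
          have "0 = f (\<Sum>c\<in>?I. sc (w c) (y c))" using R f0 by simp
          also have "\<dots> = (\<Sum>c\<in>?I. f (sc (w c) (y c)))" using fsum[OF _ yI] insert(1) by simp
          also have "\<dots> = (\<Sum>c\<in>?I. sc (w c) x + sc (w c * c) (y c))"
            using insert(4) by (intro sum.cong) (auto simp: fsc yJ fy V.scale_right_distrib)
          also have "\<dots> = sc (\<Sum>c\<in>?I. w c) x + (\<Sum>c\<in>?I. sc (w c * c) (y c))"
            by (simp add: sum.distrib V.scale_sum_left)
          finally have E1: "sc (\<Sum>c\<in>?I. w c) x + (\<Sum>c\<in>?I. sc (w c * c) (y c)) = 0" by simp
          have "(\<Sum>c\<in>?I. sc (w c * (c - c0)) (y c)) + sc c0 (\<Sum>c\<in>?I. sc (w c) (y c))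
              = (\<Sum>c\<in>?I. sc (w c * (c - c0)) (y c) + sc c0 (sc (w c) (y c)))"
            by (simp only: sum.distrib V.scale_sum_right)
          also have "\<dots> = (\<Sum>c\<in>?I. sc (w c * c) (y c))"
          proof (rule sum.cong[OF refl])
            fix c
            have e: "w c * (c - c0) + c0 * w c = w c * c" by (simp add: algebra_simps)
            show "sc (w c * (c - c0)) (y c) + sc c0 (sc (w c) (y c)) = sc (w c * c) (y c)"
              by (simp only: V.scale_scale V.scale_left_distrib[symmetric] e)
          qed
          finally have "(\<Sum>c\<in>?I. sc (w c * c) (y c)) = (\<Sum>c\<in>?I. sc (w c * (c - c0)) (y c)) + sc c0 (\<Sum>c\<in>?I. sc (w c) (y c))"
            by simp
          also have "(\<Sum>c\<in>?I. sc (w c * (c - c0)) (y c)) = (\<Sum>c\<in>U. sc (w c * (c - c0)) (y c))"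
            using insert(1,2) by simp
          finally have E: "sc (\<Sum>c\<in>?I. w c) x + (\<Sum>c\<in>U. sc (w c * (c - c0)) (y c)) = 0"
            using E1 R by simp
          show "\<forall>c\<in>?I. w c = 0"
          proof (cases "(\<Sum>c\<in>?I. w c) = 0")
            case False
            define G where "G = y ` ?I"
            have fG: "finite G" unfolding G_def using insert(1) by simp
            have GJ: "V.span G \<subseteq> J" using insert(4) yJ unfolding G_def by (intro V.span_minimal Jsub) auto
            have "sc (\<Sum>c\<in>?I. w c) x = - (\<Sum>c\<in>U. sc (w c * (c - c0)) (y c))" using E by (simp add: eq_neg_iff_add_eq_0)
            moreover have "(\<Sum>c\<in>U. sc (w c * (c - c0)) (y c)) \<in> V.span G"
              unfolding G_def by (intro V.span_sum V.span_scale V.span_base) auto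
            ultimately have "sc (\<Sum>c\<in>?I. w c) x \<in> V.span G" by (simp add: V.span_neg)
            then have "sc (1 / (\<Sum>c\<in>?I. w c)) (sc (\<Sum>c\<in>?I. w c) x) \<in> V.span G" by (rule V.span_scale)
            then have xG: "x \<in> V.span G" using False by simp
            have gW: "\<forall>v\<in>V.span G. f v \<in> V.span G"
            proof
              fix v assume v: "v \<in> V.span G"
              have sub: "V.subspace {v. v \<in> J \<and> f v \<in> V.span G}"
              proof (rule V.subspaceI)
                show "0 \<in> {v. v \<in> J \<and> f v \<in> V.span G}" using J0 f0 V.span_zero by simp
              next
                fix u v assume "u \<in> {v. v \<in> J \<and> f v \<in> V.span G}" "v \<in> {v. v \<in> J \<and> f v \<in> V.span G}"
                then have u: "u \<in> J" "f u \<in> V.span G" and v: "v \<in> J" "f v \<in> V.span G" by auto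
                have "f (u + v) = f u + f v" by (rule fadd[OF u(1) v(1)])
                then show "u + v \<in> {v. v \<in> J \<and> f v \<in> V.span G}"
                  using Jadd[OF u(1) v(1)] V.span_add[OF u(2) v(2)] by simp
              next
                fix a u assume "u \<in> {v. v \<in> J \<and> f v \<in> V.span G}"
                then have u: "u \<in> J" "f u \<in> V.span G" by auto
                have "f (sc a u) = sc a (f u)" by (rule fsc[OF u(1)])
                then show "sc a u \<in> {v. v \<in> J \<and> f v \<in> V.span G}"
                  using Jsc[OF u(1)] V.span_scale[OF u(2)] by simp
              qed
              have "\<forall>v\<in>G. v \<in> J \<and> f v \<in> V.span G"
              proof
                fix v assume "v \<in> G"
                then obtain c where c: "c \<in> ?I" "v = y c" unfolding G_def by blast
                then have cS: "c \<in> S" using insert(4) by blast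
                have "f v = x + sc c v" using fy[OF cS] c by simp
                moreover have "v \<in> V.span G" using \<open>v \<in> G\<close> V.span_base by blast
                ultimately show "v \<in> J \<and> f v \<in> V.span G" using xG yJ[OF cS] c
                  by (simp add: V.span_add V.span_scale)
              qed
              then show "f v \<in> V.span G" using V.span_induct[OF v, of "\<lambda>v. v \<in> J \<and> f v \<in> V.span G"] sub by auto
            qed
            have gadd: "\<forall>v\<in>V.span G. \<forall>w\<in>V.span G. f (v + w) = f v + f w" using GJ fadd by blast
            have gsc: "\<forall>a. \<forall>v\<in>V.span G. f (sc a v) = sc a (f v)" using GJ fsc by blast
            obtain ww r where "ww \<in> V.span G" "ww \<noteq> 0" "f ww = sc r ww"
              using eigen[OF V.vector_space_axioms fG gW gadd gsc xG x0] by blast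
            then show ?thesis using noev GJ by blast
          next
            case True
            then have "(\<Sum>c\<in>U. sc (w c * (c - c0)) (y c)) = 0" using E by simp
            moreover have U_S: "U \<subseteq> S" using insert(4) by blast
            ultimately have "\<forall>c\<in>U. w c * (c - c0) = 0"
              using insert.IH[OF U_S, rule_format, of "\<lambda>c. w c * (c - c0)"] by simp
            then have wU: "\<forall>c\<in>U. w c = 0" using insert(2) by auto
            then have "sc (w c0) (y c0) = 0" using R insert(1,2) by simp
            then have "w c0 = 0" using y0 insert(4) by simp
            with wU show ?thesis by simp
          qed
        qed
      qed
      have "V.independent (y ` S)"
      proof
        assume "V.dependent (y ` S)"
        then obtain T u where T: "finite T" "T \<subseteq> y ` S" "(\<Sum>v\<in>T. sc (u v) v) = 0" "\<exists>v\<in>T. u v \<noteq> 0"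
          unfolding V.dependent_explicit by blast
        obtain U where U: "U \<subseteq> S" "finite U" "T = y ` U" using finite_subset_image[OF T(1,2)] by blast
        have iU: "inj_on y U" using inj_on_subset[OF yinj U(1)] .
        have "(\<Sum>c\<in>U. sc (u (y c)) (y c)) = 0" using T(3) U(3) by (simp add: sum.reindex[OF iU])
        then have "\<forall>c\<in>U. u (y c) = 0" using core[OF U(2,1), rule_format, of "\<lambda>c. u (y c)"] by simp
        then show False using T(4) U(3) by blast
      qed
      then have "countable (y ` S)" using V.indep_countable[OF M(1)] M(2) by blast
      then have "countable S" using countable_image_inj_on yinj by blast
      then show False using S unfolding S_def by simp
    qed
    have "stdp (Suc d) x = 0" for x :: "nat \<Rightarrow> 'a"
    proof (rule Z, intro ballI)
      fix c assume "c \<in> S"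
      then have "card (F c) \<le> d" unfolding S_def by simp
      then show "stdp (Suc d) x \<in> L c" using stdp_in_ideal[OF alg Lid F(1)] F(2) by blast
    qed
    then have "satisfies_PI sc" using stdp_PI[OF V.vector_space_axioms] by blast
    with nPI show ?thesis by simp
  qed
qed

lemma family:
  fixes sc :: "'k::alg_closed_field \<Rightarrow> 'a::ring_1 \<Rightarrow> 'a"
  assumes unc: "uncountable (UNIV :: 'k set)" and ji: "just_infinite sc"
    and M: "countable M" "module.span sc M = UNIV" and nPI: "\<not> satisfies_PI sc"
    and Ix: "finite Ix"
  shows "two_sided_ideal J \<Longrightarrow> J \<noteq> {0} \<Longrightarrow> \<forall>i\<in>Ix. bimod J (f i) \<Longrightarrow>
    \<exists>c J'. two_sided_ideal J' \<and> J' \<noteq> {0} \<and> J' \<subseteq> J \<and> (\<forall>i\<in>Ix. \<forall>x\<in>J'. f i x = sc (c i) x)"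
  using Ix
proof (induction Ix arbitrary: J rule: finite_induct)
  case empty
  then show ?case by blast
next
  case (insert i Ix)
  then obtain c J1 where J1: "two_sided_ideal J1" "J1 \<noteq> {0}" "J1 \<subseteq> J" "\<forall>i\<in>Ix. \<forall>x\<in>J1. f i x = sc (c i) x"
    by blast
  have "bimod J1 (f i)" using insert.prems(3) J1(3) bimod_mono by blast
  then obtain c0 J2 where J2: "two_sided_ideal J2" "J2 \<noteq> {0}" "J2 \<subseteq> J1" "\<forall>x\<in>J2. f i x = sc c0 x"
    using single[OF unc ji M nPI J1(1,2)] by blast
  show ?case
    by (rule exI[of _ "c(i := c0)"], rule exI[of _ J2]) (use J1 J2 in auto)
qed



locale bcl =
  fixes sc :: "'k::field \<Rightarrow> 'a::ring_1 \<Rightarrow> 'a" and iota :: "'k \<Rightarrow> 'K::field"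
    and tsc :: "'K \<Rightarrow> 't::ring_1 \<Rightarrow> 't" and phi :: "'a \<Rightarrow> 't"
  assumes bc: "base_change sc iota tsc phi"
begin

lemma algA: "is_algebra sc" and algT: "is_algebra tsc"
  using bc unfolding base_change_def by blast+

sublocale VA: vector_space sc using alg_facts(1)[OF algA] .
sublocale VT: vector_space tsc using alg_facts(1)[OF algT] .

lemma phi_add: "phi (x + y) = phi x + phi y" and phi_mul: "phi (x * y) = phi x * phi y"
  and phi_one: "phi 1 = 1" and phi_sc: "phi (sc c x) = tsc (iota c) (phi x)"
  and iota_add: "iota (c + d) = iota c + iota d" and iota_mul: "iota (c * d) = iota c * iota d"
  and iota_one: "iota 1 = 1"
  and span_phi: "VT.span (range phi) = UNIV"
  and indep_phi: "\<not> VA.dependent F \<Longrightarrow> inj_on phi F \<and> \<not> VT.dependent (phi ` F)"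
  using bc unfolding base_change_def by blast+

lemma phi_0: "phi 0 = 0" using phi_add[of 0 0] by simp
lemma phi_neg: "phi (- x) = - phi x" using phi_add[of x "- x"] phi_0 by (simp add: add_eq_0_iff)
lemma phi_diff: "phi (x - y) = phi x - phi y" using phi_add[of x "- y"] phi_neg by simp
lemma phi_sum: "phi (sum h A) = (\<Sum>i\<in>A. phi (h i))"
  by (induction A rule: infinite_finite_induct) (simp_all add: phi_0 phi_add)

lemma iota_0: "iota 0 = 0"
proof -
  have "iota 0 + iota 0 = iota 0 + 0" using iota_add[of 0 0] by simp
  then show ?thesis by (rule add_left_imp_eq)
qed
lemma iota_nz: "c \<noteq> 0 \<Longrightarrow> iota c \<noteq> 0"
  using iota_mul[of c "inverse c"] iota_one by auto
lemma iota_inv: "c \<noteq> 0 \<Longrightarrow> iota c * iota (inverse c) = 1"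
  using iota_mul[of c "inverse c"] iota_one by simp

lemma tsc_mul: "tsc c (x * y) = tsc c x * y" "tsc c (x * y) = x * tsc c y"
  using alg_facts(2,3)[OF algT] by blast+
lemma sc_mul: "sc c (x * y) = sc c x * y" "sc c (x * y) = x * sc c y"
  using alg_facts(2,3)[OF algA] by blast+

lemma phi_span: "x \<in> VA.span F \<Longrightarrow> phi x \<in> VT.span (phi ` F)"
proof -
  assume x: "x \<in> VA.span F"
  have sub: "VA.subspace {x. phi x \<in> VT.span (phi ` F)}"
    by (rule VA.subspaceI) (auto simp: phi_0 phi_add phi_sc VT.span_zero VT.span_add VT.span_scale)
  have "\<forall>x\<in>F. phi x \<in> VT.span (phi ` F)" by (auto intro: VT.span_base)
  then show ?thesis using VA.span_induct[OF x, of "\<lambda>x. phi x \<in> VT.span (phi ` F)"] sub by auto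
qed

lemma infdim:
  assumes "infinite_dim sc" shows "infinite_dim tsc"
proof -
  have fin: "VA.span B \<noteq> UNIV" if "finite B" for B using assms that unfolding infinite_dim_def by blast
  have ex: "\<exists>B. VA.independent B \<and> finite B \<and> card B = n" for n
  proof (induction n)
    case 0
    show ?case by (intro exI[of _ "{}"]) (auto simp: VA.independent_empty)
  next
    case (Suc n)
    then obtain B where B: "VA.independent B" "finite B" "card B = n" by blast
    then obtain a where a: "a \<notin> VA.span B" using fin by blast
    then have "a \<notin> B" using VA.span_base by blast
    then show ?case using B a VA.independent_insertI[OF a B(1)]
      by (intro exI[of _ "insert a B"]) auto
  qed
  show ?thesis unfolding infinite_dim_def
  proof
    assume "\<exists>G. finite G \<and> VT.span G = UNIV"
    then obtain G where G: "finite G" "VT.span G = UNIV" by blast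
    obtain B where B: "VA.independent B" "finite B" "card B = Suc (card G)" using ex by blast
    from indep_phi[OF B(1)] have "inj_on phi B" "VT.independent (phi ` B)" by auto
    then have "card (phi ` B) \<le> card G" using VT.independent_span_bound[OF G(1)] G(2) by auto
    moreover have "card (phi ` B) = card B" using \<open>inj_on phi B\<close> by (simp add: card_image)
    ultimately show False using B(3) by simp
  qed
qed

definition rep :: "'t set \<Rightarrow> ('t \<Rightarrow> 'K) \<Rightarrow> ('t \<Rightarrow> 'a) \<Rightarrow> 't" where
  "rep Ix \<mu> a = (\<Sum>i\<in>Ix. tsc (\<mu> i) (phi (a i)))"

lemma rep_exists: "\<exists>Ix \<mu> a. finite Ix \<and> t = rep Ix \<mu> a"
proof -
  have "t \<in> VT.span (range phi)" using span_phi by simp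
  then obtain T0 r where T0: "finite T0" "T0 \<subseteq> range phi" "t = (\<Sum>v\<in>T0. tsc (r v) v)"
    unfolding VT.span_explicit by blast
  define a where "a v = inv phi v" for v
  have "phi (a v) = v" if "v \<in> T0" for v using T0(2) that unfolding a_def by (auto simp: f_inv_into_f)
  then have "t = rep T0 r a" unfolding rep_def T0(3) by (intro sum.cong) auto
  then show ?thesis using T0(1) by blast
qed

end



context bcl begin

lemma ideal_fc:
  assumes ji: "just_infinite sc"
    and fam: "\<And>J (f :: 't \<Rightarrow> 'a \<Rightarrow> 'a) Ix. finite Ix \<Longrightarrow> two_sided_ideal J \<Longrightarrow> J \<noteq> {0} \<Longrightarrow>
       \<forall>i\<in>Ix. bimod J (f i) \<Longrightarrow>
       \<exists>c J'. two_sided_ideal J' \<and> J' \<noteq> {0} \<and> J' \<subseteq> J \<and> (\<forall>i\<in>Ix. \<forall>x\<in>J'. f i x = sc (c i) x)"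
    and I: "two_sided_ideal I" "I \<noteq> {0}"
  shows "finite_codim tsc I"
proof -
  have I0: "0 \<in> I" and Iadd: "\<And>u v. u \<in> I \<Longrightarrow> v \<in> I \<Longrightarrow> u + v \<in> I"
    and Ineg: "\<And>u. u \<in> I \<Longrightarrow> - u \<in> I"
    and Il: "\<And>u z. u \<in> I \<Longrightarrow> z * u \<in> I" and Ir: "\<And>u z. u \<in> I \<Longrightarrow> u * z \<in> I"
    using I(1) unfolding two_sided_ideal_def by blast+
  have Isc: "\<And>u c. u \<in> I \<Longrightarrow> tsc c u \<in> I" using ideal_scale[OF algT I(1)] by blast
  have Idiff: "\<And>u v. u \<in> I \<Longrightarrow> v \<in> I \<Longrightarrow> u - v \<in> I" using Iadd Ineg by (metis diff_conv_add_uminus)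
  obtain t0 where t0: "t0 \<in> I" "t0 \<noteq> 0" using I(2) I0 by blast
  define P where "P n \<longleftrightarrow> (\<exists>Ix \<mu> a. finite Ix \<and> card Ix = n \<and> rep Ix \<mu> a \<in> I \<and> rep Ix \<mu> a \<noteq> 0)" for n
  have exP: "\<exists>n. P n" using rep_exists[of t0] t0 unfolding P_def by blast
  define n0 where "n0 = (LEAST n. P n)"
  have "P n0" unfolding n0_def using exP by (rule LeastI_ex)
  then obtain Ix \<mu> a where Ix: "finite Ix" "card Ix = n0" "rep Ix \<mu> a \<in> I" "rep Ix \<mu> a \<noteq> 0"
    unfolding P_def by blast
  have minim: "rep Ix1 \<mu>1 a1 = 0" if "finite Ix1" "card Ix1 < n0" "rep Ix1 \<mu>1 a1 \<in> I" for Ix1 \<mu>1 a1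
  proof (rule ccontr)
    assume "rep Ix1 \<mu>1 a1 \<noteq> 0"
    then have "P (card Ix1)" unfolding P_def using that by blast
    then have "n0 \<le> card Ix1" unfolding n0_def by (rule Least_le)
    with that show False by simp
  qed
  have P1: "\<forall>i\<in>Ix. \<beta> i = 0" if rel: "(\<Sum>i\<in>Ix. iota (\<beta> i) * \<mu> i) = 0" for \<beta>
  proof (rule ccontr)
    assume "\<not> (\<forall>i\<in>Ix. \<beta> i = 0)"
    then obtain j where j: "j \<in> Ix" "\<beta> j \<noteq> 0" by blast
    define \<kappa> where "\<kappa> = inverse (\<beta> j)"
    define a' where "a' i = a i - sc (\<beta> i * \<kappa>) (a j)" for i
    let ?Ix = "Ix - {j}"
    have fIx: "finite ?Ix" using Ix(1) by simp
    have "(\<Sum>i\<in>Ix. iota (\<beta> i) * \<mu> i) = iota (\<beta> j) * \<mu> j + (\<Sum>i\<in>?Ix. iota (\<beta> i) * \<mu> i)"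
      using Ix(1) j(1) by (simp add: sum.remove)
    then have r1: "(\<Sum>i\<in>?Ix. iota (\<beta> i) * \<mu> i) = - (iota (\<beta> j) * \<mu> j)" using rel by (simp add: add_eq_0_iff)
    have "(\<Sum>i\<in>?Ix. \<mu> i * iota (\<beta> i * \<kappa>)) = (\<Sum>i\<in>?Ix. iota (\<beta> i) * \<mu> i) * iota \<kappa>"
      unfolding sum_distrib_right by (intro sum.cong) (simp_all add: iota_mul mult_ac)
    also have "\<dots> = - (\<mu> j * (iota (\<beta> j) * iota \<kappa>))" using r1 by (simp add: mult_ac)
    also have "\<dots> = - \<mu> j" using iota_inv[OF j(2)] unfolding \<kappa>_def by simp
    finally have sumrel: "(\<Sum>i\<in>?Ix. \<mu> i * iota (\<beta> i * \<kappa>)) = - \<mu> j" .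
    have "rep ?Ix \<mu> a' = (\<Sum>i\<in>?Ix. tsc (\<mu> i) (phi (a i)) - tsc (\<mu> i * iota (\<beta> i * \<kappa>)) (phi (a j)))"
      unfolding rep_def a'_def by (intro sum.cong) (simp_all add: phi_diff phi_sc VT.scale_right_diff_distrib)
    also have "\<dots> = (\<Sum>i\<in>?Ix. tsc (\<mu> i) (phi (a i))) - tsc (\<Sum>i\<in>?Ix. \<mu> i * iota (\<beta> i * \<kappa>)) (phi (a j))"
      by (simp add: sum_subtractf VT.scale_sum_left)
    also have "\<dots> = (\<Sum>i\<in>?Ix. tsc (\<mu> i) (phi (a i))) + tsc (\<mu> j) (phi (a j))"
      by (simp add: sumrel VT.scale_minus_left)
    also have "\<dots> = rep Ix \<mu> a" unfolding rep_def using Ix(1) j(1) by (simp add: sum.remove add.commute)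
    finally have eq: "rep ?Ix \<mu> a' = rep Ix \<mu> a" .
    have cI: "card ?Ix < n0" using card_Diff1_less[OF Ix(1) j(1)] Ix(2) by simp
    have "rep ?Ix \<mu> a' \<in> I" using eq Ix(3) by simp
    then have "rep ?Ix \<mu> a' = 0" by (rule minim[OF fIx cI])
    with eq Ix(4) show False by simp
  qed
  have P1': "\<forall>i\<in>Ix1. \<beta> i = 0" if sub: "Ix1 \<subseteq> Ix" and rel: "(\<Sum>i\<in>Ix1. iota (\<beta> i) * \<mu> i) = 0" for Ix1 \<beta>
  proof -
    define \<beta>' where "\<beta>' i = (if i \<in> Ix1 then \<beta> i else 0)" for i
    have "(\<Sum>i\<in>Ix. iota (\<beta>' i) * \<mu> i) = (\<Sum>i\<in>Ix1. iota (\<beta> i) * \<mu> i)"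
      unfolding \<beta>'_def using sub Ix(1)
      by (intro sum.mono_neutral_cong_right) (auto simp: iota_0)
    then have "\<forall>i\<in>Ix. \<beta>' i = 0" using P1 rel by simp
    then show ?thesis using sub unfolding \<beta>'_def by (metis subsetD)
  qed
  have Uniq: "\<forall>i\<in>Ix1. b i = 0" if sub: "Ix1 \<subseteq> Ix" and rel: "(\<Sum>i\<in>Ix1. tsc (\<mu> i) (phi (b i))) = 0" for Ix1 b
  proof -
    have fIx1: "finite Ix1" using finite_subset[OF sub Ix(1)] .
    obtain B where B: "B \<subseteq> b ` Ix1" "VA.independent B" "b ` Ix1 \<subseteq> VA.span B" "card B = VA.dim (b ` Ix1)"
      by (rule VA.basis_exists[of "b ` Ix1"])
    have fB: "finite B" using finite_subset[OF B(1) finite_imageI[OF fIx1]] .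
    have "\<forall>i\<in>Ix1. \<exists>u. b i = (\<Sum>e\<in>B. sc (u e) e)"
      using B(3) unfolding VA.span_finite[OF fB] by blast
    then have "\<exists>\<beta>. \<forall>i\<in>Ix1. b i = (\<Sum>e\<in>B. sc (\<beta> i e) e)" by (rule bchoice)
    then obtain \<beta> where \<beta>0: "\<forall>i\<in>Ix1. b i = (\<Sum>e\<in>B. sc (\<beta> i e) e)" by metis
    have \<beta>: "\<And>i. i \<in> Ix1 \<Longrightarrow> b i = (\<Sum>e\<in>B. sc (\<beta> i e) e)" using \<beta>0 by (rule bspec)
    have ipB: "inj_on phi B" and idB: "VT.independent (phi ` B)" using indep_phi[OF B(2)] by auto
    have "0 = (\<Sum>i\<in>Ix1. tsc (\<mu> i) (phi (\<Sum>e\<in>B. sc (\<beta> i e) e)))" using rel \<beta> by simp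
    also have "\<dots> = (\<Sum>i\<in>Ix1. \<Sum>e\<in>B. tsc (\<mu> i * iota (\<beta> i e)) (phi e))"
      by (simp add: phi_sum phi_sc VT.scale_sum_right)
    also have "\<dots> = (\<Sum>e\<in>B. tsc (\<Sum>i\<in>Ix1. \<mu> i * iota (\<beta> i e)) (phi e))"
      by (subst sum.swap) (simp add: VT.scale_sum_left)
    finally have z: "(\<Sum>e\<in>B. tsc (\<Sum>i\<in>Ix1. \<mu> i * iota (\<beta> i e)) (phi e)) = 0" by simp
    define u where "u v = (\<Sum>i\<in>Ix1. \<mu> i * iota (\<beta> i (the_inv_into B phi v)))" for v
    have "(\<Sum>v\<in>phi ` B. tsc (u v) v) = (\<Sum>e\<in>B. tsc (u (phi e)) (phi e))"
      by (rule sum.reindex[OF ipB, unfolded comp_def])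
    also have "\<dots> = (\<Sum>e\<in>B. tsc (\<Sum>i\<in>Ix1. \<mu> i * iota (\<beta> i e)) (phi e))"
      unfolding u_def by (intro sum.cong) (simp_all add: the_inv_into_f_f[OF ipB])
    finally have z2: "(\<Sum>v\<in>phi ` B. tsc (u v) v) = 0" using z by simp
    have ue: "(\<Sum>i\<in>Ix1. \<mu> i * iota (\<beta> i e)) = 0" if "e \<in> B" for e
    proof -
      have "u (phi e) = 0" using VT.independentD[OF idB _ subset_refl z2] fB that by simp
      then show ?thesis unfolding u_def using the_inv_into_f_f[OF ipB that] by simp
    qed
    have "\<beta> i e = 0" if "i \<in> Ix1" "e \<in> B" for i e
      using P1'[OF sub, of "\<lambda>i. \<beta> i e"] ue[OF that(2)] that(1) by (simp add: mult.commute)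
    then show ?thesis using \<beta> by simp
  qed
  have "Ix \<noteq> {}" using Ix(4) unfolding rep_def by auto
  then obtain j0 where j0: "j0 \<in> Ix" by blast
  define Ix1 where "Ix1 = Ix - {j0}"
  have fIx1: "finite Ix1" "Ix1 \<subseteq> Ix" "card Ix1 < n0"
    using Ix(1,2) j0 card_Diff1_less[OF Ix(1) j0] unfolding Ix1_def by auto
  define E where "E x b = tsc (\<mu> j0) (phi x) + (\<Sum>i\<in>Ix1. tsc (\<mu> i) (phi (b i)))" for x b
  have Erep: "E x b = rep Ix \<mu> (b(j0 := x))" for x b
  proof -
    have "rep Ix \<mu> (b(j0 := x)) = tsc (\<mu> j0) (phi x) + (\<Sum>i\<in>Ix1. tsc (\<mu> i) (phi ((b(j0 := x)) i)))"
      unfolding rep_def Ix1_def using Ix(1) j0 by (simp add: sum.remove)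
    also have "(\<Sum>i\<in>Ix1. tsc (\<mu> i) (phi ((b(j0 := x)) i))) = (\<Sum>i\<in>Ix1. tsc (\<mu> i) (phi (b i)))"
      unfolding Ix1_def by (intro sum.cong) auto
    finally show ?thesis unfolding E_def by (rule sym)
  qed
  have Ediff: "E x b - E x' b' = E (x - x') (\<lambda>i. b i - b' i)" for x x' b b'
    unfolding E_def by (simp add: phi_diff VT.scale_right_diff_distrib sum_subtractf)
  have Eadd: "E x b + E x' b' = E (x + x') (\<lambda>i. b i + b' i)" for x x' b b'
    unfolding E_def by (simp add: phi_add VT.scale_right_distrib sum.distrib)
  have Eneg: "- E x b = E (- x) (\<lambda>i. - b i)" for x b
    unfolding E_def by (simp add: phi_neg VT.scale_minus_right sum_negf)
  have Elm: "phi z * E x b = E (z * x) (\<lambda>i. z * b i)" for z x b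
    unfolding E_def by (simp add: phi_mul distrib_left sum_distrib_left tsc_mul(2)[symmetric])
  have Erm: "E x b * phi z = E (x * z) (\<lambda>i. b i * z)" for z x b
    unfolding E_def by (simp add: phi_mul distrib_right sum_distrib_right tsc_mul(1)[symmetric])
  have E0: "E 0 (\<lambda>i. 0) = 0" unfolding E_def by (simp add: phi_0)
  have uniqE: "\<forall>i\<in>Ix1. b i = b' i" if "E x b \<in> I" "E x b' \<in> I" for x b b'
  proof -
    have "E x b - E x b' \<in> I" using Idiff that by blast
    moreover have "E x b - E x b' = rep Ix1 \<mu> (\<lambda>i. b i - b' i)"
      by (simp only: Ediff) (simp add: E_def rep_def phi_0)
    ultimately have "rep Ix1 \<mu> (\<lambda>i. b i - b' i) = 0" using minim fIx1 by simp
    then have "\<forall>i\<in>Ix1. b i - b' i = 0" unfolding rep_def by (rule Uniq[OF fIx1(2), of "\<lambda>i. b i - b' i"])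
    then show ?thesis by simp
  qed
  define J where "J = {x. \<exists>b. E x b \<in> I}"
  define g where "g i x = (SOME b. E x b \<in> I) i" for i x
  have gE: "E x (\<lambda>i. g i x) \<in> I" if "x \<in> J" for x
  proof -
    have "\<exists>b. E x b \<in> I" using that unfolding J_def by simp
    then have "E x (SOME b. E x b \<in> I) \<in> I" by (rule someI_ex)
    then show ?thesis unfolding g_def by (simp add: eta_contract_eq)
  qed
  have gU: "g i x = b i" if "E x b \<in> I" "i \<in> Ix1" for x b i
  proof -
    have "x \<in> J" using that(1) unfolding J_def by blast
    then show ?thesis using uniqE[OF gE that(1)] that(2) by simp
  qed
  have Jid: "two_sided_ideal J"
    unfolding two_sided_ideal_def
  proof (intro conjI ballI allI)
    have "E 0 (\<lambda>i. 0) \<in> I" using E0 I0 by simp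
    then show "0 \<in> J" unfolding J_def by blast
  next
    fix x y assume "x \<in> J" "y \<in> J"
    then obtain b b' where "E x b \<in> I" "E y b' \<in> I" unfolding J_def by blast
    then have "E (x + y) (\<lambda>i. b i + b' i) \<in> I" unfolding Eadd[symmetric] by (rule Iadd)
    then show "x + y \<in> J" unfolding J_def by blast
  next
    fix x assume "x \<in> J"
    then obtain b where "E x b \<in> I" unfolding J_def by blast
    then have "E (- x) (\<lambda>i. - b i) \<in> I" unfolding Eneg[symmetric] by (rule Ineg)
    then show "- x \<in> J" unfolding J_def by blast
  next
    fix x z assume "x \<in> J"
    then obtain b where "E x b \<in> I" unfolding J_def by blast
    then have "E (z * x) (\<lambda>i. z * b i) \<in> I" unfolding Elm[symmetric] by (rule Il)
    then show "z * x \<in> J" unfolding J_def by blast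
  next
    fix x z assume "x \<in> J"
    then obtain b where "E x b \<in> I" unfolding J_def by blast
    then have "E (x * z) (\<lambda>i. b i * z) \<in> I" unfolding Erm[symmetric] by (rule Ir)
    then show "x * z \<in> J" unfolding J_def by blast
  qed
  have aJ: "a j0 \<in> J"
  proof -
    have "E (a j0) a = rep Ix \<mu> a" using Erep[of "a j0" a] by simp
    then have "E (a j0) a \<in> I" using Ix(3) by simp
    then show ?thesis unfolding J_def by blast
  qed
  have a0: "a j0 \<noteq> 0"
  proof
    assume "a j0 = 0"
    then have "E (a j0) a = rep Ix1 \<mu> a" unfolding E_def rep_def by (simp add: phi_0)
    moreover have "E (a j0) a = rep Ix \<mu> a" using Erep[of "a j0" a] by simp
    ultimately have "rep Ix1 \<mu> a = 0" using minim[OF fIx1(1,3)] Ix(3) by simp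
    then show False using \<open>E (a j0) a = rep Ix1 \<mu> a\<close> \<open>E (a j0) a = rep Ix \<mu> a\<close> Ix(4) by simp
  qed
  have Jne: "J \<noteq> {0}" using aJ a0 by blast
  have bim: "\<forall>i\<in>Ix1. bimod J (g i)"
  proof
    fix i assume i: "i \<in> Ix1"
    show "bimod J (g i)"
      unfolding bimod_def
    proof (intro conjI ballI allI)
      fix x y assume "x \<in> J" "y \<in> J"
      then have "E (x + y) (\<lambda>i. g i x + g i y) \<in> I" unfolding Eadd[symmetric] by (intro Iadd gE)
      then show "g i (x + y) = g i x + g i y" using gU i by blast
    next
      fix x z assume "x \<in> J"
      then have "E (z * x) (\<lambda>i. z * g i x) \<in> I" unfolding Elm[symmetric] by (intro Il gE)
      then show "g i (z * x) = z * g i x" using gU i by blast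
    next
      fix x z assume "x \<in> J"
      then have "E (x * z) (\<lambda>i. g i x * z) \<in> I" unfolding Erm[symmetric] by (intro Ir gE)
      then show "g i (x * z) = g i x * z" using gU i by blast
    qed
  qed
  obtain c J' where J': "two_sided_ideal J'" "J' \<noteq> {0}" "J' \<subseteq> J" "\<forall>i\<in>Ix1. \<forall>x\<in>J'. g i x = sc (c i) x"
    using fam[OF fIx1(1) Jid Jne bim] by blast
  define \<nu> where "\<nu> = \<mu> j0 + (\<Sum>i\<in>Ix1. \<mu> i * iota (c i))"
  have \<nu>0: "\<nu> \<noteq> 0"
  proof
    assume "\<nu> = 0"
    define \<beta> where "\<beta> i = (if i = j0 then 1 else c i)" for i
    have "(\<Sum>i\<in>Ix. iota (\<beta> i) * \<mu> i) = iota (\<beta> j0) * \<mu> j0 + (\<Sum>i\<in>Ix1. iota (\<beta> i) * \<mu> i)"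
      unfolding Ix1_def using Ix(1) j0 by (simp add: sum.remove)
    also have "\<dots> = \<nu>"
    proof -
      have "(\<Sum>i\<in>Ix1. iota (\<beta> i) * \<mu> i) = (\<Sum>i\<in>Ix1. \<mu> i * iota (c i))"
        by (rule sum.cong[OF refl]) (simp add: \<beta>_def Ix1_def mult.commute)
      moreover have "iota (\<beta> j0) * \<mu> j0 = \<mu> j0" by (simp add: \<beta>_def iota_one)
      ultimately show ?thesis unfolding \<nu>_def by simp
    qed
    finally have "\<forall>i\<in>Ix. \<beta> i = 0" using P1 \<open>\<nu> = 0\<close> by simp
    then show False using j0 unfolding \<beta>_def by auto
  qed
  have phiJ': "phi x \<in> I" if "x \<in> J'" for x
  proof -
    have xJ: "x \<in> J" using that J'(3) by blast
    have "(\<Sum>i\<in>Ix1. tsc (\<mu> i) (phi (g i x))) = (\<Sum>i\<in>Ix1. tsc (\<mu> i * iota (c i)) (phi x))"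
    proof (rule sum.cong[OF refl])
      fix i assume "i \<in> Ix1"
      then have "g i x = sc (c i) x" using J'(4) that by blast
      then show "tsc (\<mu> i) (phi (g i x)) = tsc (\<mu> i * iota (c i)) (phi x)" by (simp add: phi_sc)
    qed
    then have "E x (\<lambda>i. g i x) = tsc (\<mu> j0) (phi x) + (\<Sum>i\<in>Ix1. tsc (\<mu> i * iota (c i)) (phi x))"
      unfolding E_def by simp
    also have "\<dots> = tsc \<nu> (phi x)" unfolding \<nu>_def by (simp add: VT.scale_left_distrib VT.scale_sum_left)
    finally have "tsc \<nu> (phi x) \<in> I" using gE[OF xJ] by simp
    then have "tsc (inverse \<nu>) (tsc \<nu> (phi x)) \<in> I" by (rule Isc)
    then show ?thesis using \<nu>0 by simp
  qed
  have "finite_codim sc J'" using ji J'(1,2) unfolding just_infinite_def by blast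
  then obtain F where F: "finite F" "\<forall>x. \<exists>b\<in>VA.span F. x - b \<in> J'" unfolding finite_codim_def by blast
  show ?thesis unfolding finite_codim_def
  proof (intro exI[of _ "phi ` F"] conjI allI)
    show "finite (phi ` F)" using F(1) by simp
    fix t
    obtain Ix2 \<mu>2 a2 where t: "finite Ix2" "t = rep Ix2 \<mu>2 a2" using rep_exists by blast
    have "\<forall>i. \<exists>bb. bb \<in> VA.span F \<and> a2 i - bb \<in> J'" using F(2) by blast
    then obtain b2 where b2: "\<forall>i. b2 i \<in> VA.span F \<and> a2 i - b2 i \<in> J'" by (rule choice[THEN exE]) blast
    have "rep Ix2 \<mu>2 b2 \<in> VT.span (phi ` F)"
      unfolding rep_def using b2 phi_span by (intro VT.span_sum VT.span_scale) auto
    moreover have "t - rep Ix2 \<mu>2 b2 \<in> I"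
    proof -
      have "t - rep Ix2 \<mu>2 b2 = (\<Sum>i\<in>Ix2. tsc (\<mu>2 i) (phi (a2 i - b2 i)))"
        unfolding t(2) rep_def by (simp add: phi_diff VT.scale_right_diff_distrib sum_subtractf)
      also have "\<dots> \<in> I"
      proof (rule ideal_sum[OF I(1)], rule ballI)
        fix i assume "i \<in> Ix2"
        have "phi (a2 i - b2 i) \<in> I" using phiJ' b2 by blast
        then show "tsc (\<mu>2 i) (phi (a2 i - b2 i)) \<in> I" by (rule Isc)
      qed
      finally show ?thesis .
    qed
    ultimately show "\<exists>s\<in>VT.span (phi ` F). t - s \<in> I" by blast
  qed
qed

end


theorem corollary6p4:
  fixes sc :: "'k::alg_closed_field \<Rightarrow> 'a::ring_1 \<Rightarrow> 'a"
  assumes "uncountable (UNIV :: 'k set)"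
    and "just_infinite sc"
    and "countably_generated sc"
    and "\<not> satisfies_PI sc"
  shows "just_infinite sc \<and>
    (\<forall>(iota :: 'k \<Rightarrow> 'K::field) (tsc :: 'K \<Rightarrow> 't::ring_1 \<Rightarrow> 't) (phi :: 'a \<Rightarrow> 't).
       base_change sc iota tsc phi \<longrightarrow> just_infinite tsc)"
proof -
  have alg: "is_algebra sc" using assms(2) unfolding just_infinite_def by blast
  obtain M where M: "countable M" "module.span sc M = UNIV" using count_span[OF alg assms(3)] by blast
  show ?thesis
  proof (intro conjI allI impI)
    show "just_infinite sc" by (rule assms(2))
    fix iota :: "'k \<Rightarrow> 'K::field" and tsc :: "'K \<Rightarrow> 't::ring_1 \<Rightarrow> 't" and phi :: "'a \<Rightarrow> 't"
    assume bc: "base_change sc iota tsc phi"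
    interpret B: bcl sc iota tsc phi using bc by (rule bcl.intro)
    have idim: "infinite_dim sc" using assms(2) unfolding just_infinite_def by blast
    have fam: "\<And>J (f :: 't \<Rightarrow> 'a \<Rightarrow> 'a) Ix. finite Ix \<Longrightarrow> two_sided_ideal J \<Longrightarrow> J \<noteq> {0} \<Longrightarrow>
       \<forall>i\<in>Ix. bimod J (f i) \<Longrightarrow>
       \<exists>c J'. two_sided_ideal J' \<and> J' \<noteq> {0} \<and> J' \<subseteq> J \<and> (\<forall>i\<in>Ix. \<forall>x\<in>J'. f i x = sc (c i) x)"
      using family[OF assms(1) assms(2) M assms(4)] by blast
    show "just_infinite tsc"
      unfolding just_infinite_def
      using B.algT B.infdim[OF idim] B.ideal_fc[OF assms(2) fam] by blast
  qed
qed

end
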